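(* Let $(X,\tau)$ be a topological space, $\delta$ a quasi-proximity compatible with $\tau$ such that $\mathcal{V}_\delta$ is transitive, and suppose $N_i\in\mathcal{B}(\mathcal{V}_\delta)$ ($i\in\mathbb{N}$) satisfy $N_i\subsetneq N_{i+1}$ and $\bigcup_{i}N_i\in\mathcal{B}(\mathcal{V}_\delta)$. For $A\subseteq\mathbb{N}$ let $\alpha_A=\{X\}\cup\{N_i:i\notin A\}$ and let $U_A$ be the relation with $U_A(x)=\bigcap\{M\in\alpha_A:x\in M\}$. For a p-filter $\sigma$ on $\mathbb{N}$ let $\mathcal{V}_\sigma$ be the filter on $X\times X$ generated by $\mathcal{V}_\delta\cup\{U_A:A\in\sigma\}$. Then each $\mathcal{V}_\sigma$ belongs to $\pi(\delta)\cap T(\tau)$, and for p-filters $\sigma_1,\sigma_2$, $\mathcal{V}_{\sigma_1}\subseteq\mathcal{V}_{\sigma_2}$ implies $\sigma_1\subseteq\sigma_2$; in particular $\sigma\mapsto\mathcal{V}_\sigma$ is injective.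
   Context: Quasi-uniformities and quasi-proximities are in the sense of Fletcher–Lindgren. $\pi(\delta)$ is the set of quasi-uniformities inducing $\delta$, $\mathcal{V}_\delta$ its coarsest element; $T(\tau)$ the set of compatible quasi-uniformities with a base of transitive entourages. For $N\subseteq X$, $U_N=(N\times N)\cup((X\setminus N)\times X)$ and $\mathcal{B}(\mathcal{V}_\delta)=\{N\in\tau:U_N\in\mathcal{V}_\delta\}$. For $N\subseteq\mathbb{N}$, an $N$-pile is a subset $H\subseteq N$ that is maximal with respect to the property: $i,j\in H$, $i<k<j$, $k\in\mathbb{N}$ imply $k\in H$. A set $Z\subseteq\mathbb{N}$ is admissible for $N$ if there is $k\in\mathbb{N}$ with $|H\cap Z|\le k$ for every $N$-pile $H$. A filter $\sigma$ on $\mathbb{N}$ is a p-filter if whenever $N\in\sigma$ and $Z$ is admissible for $N$, then $N\setminus Z\in\sigma$. *)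

theory Defs
  imports "HOL-Analysis.Abstract_Topology"
begin

text \<open>Convention: the underlying set X is the universe of the type 'a.
  Entourages are relations ('a \<times> 'a) set; U(x) is U `` {x}.\<close>

definition quasi_uniformity :: "('a \<times> 'a) set set \<Rightarrow> bool" where
  "quasi_uniformity \<U> \<longleftrightarrow>
     \<U> \<noteq> {} \<and>
     (\<forall>U\<in>\<U>. Id \<subseteq> U) \<and>
     (\<forall>U V. U \<in> \<U> \<longrightarrow> U \<subseteq> V \<longrightarrow> V \<in> \<U>) \<and>
     (\<forall>U V. U \<in> \<U> \<longrightarrow> V \<in> \<U> \<longrightarrow> U \<inter> V \<in> \<U>) \<and>
     (\<forall>U\<in>\<U>. \<exists>V\<in>\<U>. V O V \<subseteq> U)"

definition qu_compatible :: "('a \<times> 'a) set set \<Rightarrow> 'a topology \<Rightarrow> bool" where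
  "qu_compatible \<U> \<tau> \<longleftrightarrow>
     (\<forall>G. openin \<tau> G \<longleftrightarrow> (\<forall>x\<in>G. \<exists>U\<in>\<U>. U `` {x} \<subseteq> G))"

definition transitive_qu :: "('a \<times> 'a) set set \<Rightarrow> bool" where
  "transitive_qu \<U> \<longleftrightarrow> (\<forall>U\<in>\<U>. \<exists>V\<in>\<U>. V \<subseteq> U \<and> trans V)"

definition quasi_proximity :: "('a set \<Rightarrow> 'a set \<Rightarrow> bool) \<Rightarrow> bool" where
  "quasi_proximity \<delta> \<longleftrightarrow>
     (\<forall>A. \<not> \<delta> A {} \<and> \<not> \<delta> {} A) \<and>
     (\<forall>A B C. \<delta> A (B \<union> C) \<longleftrightarrow> \<delta> A B \<or> \<delta> A C) \<and>
     (\<forall>A B C. \<delta> (A \<union> B) C \<longleftrightarrow> \<delta> A C \<or> \<delta> B C) \<and>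
     (\<forall>x. \<delta> {x} {x}) \<and>
     (\<forall>A B. \<not> \<delta> A B \<longrightarrow> (\<exists>C. \<not> \<delta> A C \<and> \<not> \<delta> (- C) B))"

definition qp_compatible :: "('a set \<Rightarrow> 'a set \<Rightarrow> bool) \<Rightarrow> 'a topology \<Rightarrow> bool" where
  "qp_compatible \<delta> \<tau> \<longleftrightarrow> (\<forall>G. openin \<tau> G \<longleftrightarrow> (\<forall>x\<in>G. \<not> \<delta> {x} (- G)))"

definition qu_proximity :: "('a \<times> 'a) set set \<Rightarrow> 'a set \<Rightarrow> 'a set \<Rightarrow> bool" where
  "qu_proximity \<U> A B \<longleftrightarrow> (\<forall>U\<in>\<U>. U `` A \<inter> B \<noteq> {})"

definition pi_qp :: "('a set \<Rightarrow> 'a set \<Rightarrow> bool) \<Rightarrow> ('a \<times> 'a) set set set" where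
  "pi_qp \<delta> = {\<U>. quasi_uniformity \<U> \<and> qu_proximity \<U> = \<delta>}"

definition V_qp :: "('a set \<Rightarrow> 'a set \<Rightarrow> bool) \<Rightarrow> ('a \<times> 'a) set set" where
  "V_qp \<delta> = (THE \<U>. \<U> \<in> pi_qp \<delta> \<and> (\<forall>\<W>\<in>pi_qp \<delta>. \<U> \<subseteq> \<W>))"

definition T_top :: "'a topology \<Rightarrow> ('a \<times> 'a) set set set" where
  "T_top \<tau> = {\<U>. quasi_uniformity \<U> \<and> qu_compatible \<U> \<tau> \<and> transitive_qu \<U>}"

definition U_set :: "'a set \<Rightarrow> ('a \<times> 'a) set" where
  "U_set N = (N \<times> N) \<union> ((- N) \<times> UNIV)"

definition B_qu :: "'a topology \<Rightarrow> ('a \<times> 'a) set set \<Rightarrow> 'a set set" where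
  "B_qu \<tau> \<V> = {N. openin \<tau> N \<and> U_set N \<in> \<V>}"

definition gen_filter :: "('a \<times> 'a) set set \<Rightarrow> ('a \<times> 'a) set set" where
  "gen_filter S = {W. \<exists>F. finite F \<and> F \<subseteq> S \<and> \<Inter>F \<subseteq> W}"

definition nat_convex :: "nat set \<Rightarrow> bool" where
  "nat_convex H \<longleftrightarrow> (\<forall>i j k. i \<in> H \<longrightarrow> j \<in> H \<longrightarrow> i < k \<longrightarrow> k < j \<longrightarrow> k \<in> H)"

definition pile :: "nat set \<Rightarrow> nat set \<Rightarrow> bool" where
  "pile N H \<longleftrightarrow> H \<subseteq> N \<and> nat_convex H \<and>
     (\<forall>H'. H \<subseteq> H' \<and> H' \<subseteq> N \<and> nat_convex H' \<longrightarrow> H' = H)"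

definition admissible :: "nat set \<Rightarrow> nat set \<Rightarrow> bool" where
  "admissible N Z \<longleftrightarrow> (\<exists>k::nat. \<forall>H. pile N H \<longrightarrow> finite (H \<inter> Z) \<and> card (H \<inter> Z) \<le> k)"

definition nat_filter :: "nat set set \<Rightarrow> bool" where
  "nat_filter \<sigma> \<longleftrightarrow> UNIV \<in> \<sigma> \<and> {} \<notin> \<sigma> \<and>
     (\<forall>A B. A \<in> \<sigma> \<longrightarrow> A \<subseteq> B \<longrightarrow> B \<in> \<sigma>) \<and>
     (\<forall>A B. A \<in> \<sigma> \<longrightarrow> B \<in> \<sigma> \<longrightarrow> A \<inter> B \<in> \<sigma>)"

definition p_filter :: "nat set set \<Rightarrow> bool" where
  "p_filter \<sigma> \<longleftrightarrow> nat_filter \<sigma> \<and>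
     (\<forall>N\<in>\<sigma>. \<forall>Z. admissible N Z \<longrightarrow> N - Z \<in> \<sigma>)"

definition alpha_fam :: "(nat \<Rightarrow> 'a set) \<Rightarrow> nat set \<Rightarrow> 'a set set" where
  "alpha_fam N A = insert UNIV {N i | i. i \<notin> A}"

definition U_rel :: "(nat \<Rightarrow> 'a set) \<Rightarrow> nat set \<Rightarrow> ('a \<times> 'a) set" where
  "U_rel N A = {(x, y). y \<in> \<Inter>{M \<in> alpha_fam N A. x \<in> M}}"

definition V_sigma :: "('a set \<Rightarrow> 'a set \<Rightarrow> bool) \<Rightarrow> (nat \<Rightarrow> 'a set) \<Rightarrow> nat set set \<Rightarrow> ('a \<times> 'a) set set" where
  "V_sigma \<delta> N \<sigma> = gen_filter (V_qp \<delta> \<union> {U_rel N A | A. A \<in> \<sigma>})"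

end

theory Submission
  imports Defs
begin

definition SPQ :: "'a set \<Rightarrow> 'a set \<Rightarrow> ('a \<times> 'a) set" where
  "SPQ P Q = ((-P) \<times> UNIV) \<union> (UNIV \<times> (-Q))"

definition SS :: "('a set \<Rightarrow> 'a set \<Rightarrow> bool) \<Rightarrow> ('a \<times> 'a) set set" where
  "SS \<delta> = {SPQ P Q | P Q. \<not> \<delta> P Q}"

lemma SPQ_img: "SPQ P Q `` {x} = (if x \<in> P then -Q else UNIV)"
  by (auto simp: SPQ_def)

lemma gf_mem: "s \<in> S \<Longrightarrow> s \<in> gen_filter S"
  unfolding gen_filter_def by (rule CollectI, rule exI[of _ "{s}"]) auto

lemma gf_UNIV: "UNIV \<in> gen_filter S"
  unfolding gen_filter_def by (rule CollectI, rule exI[of _ "{}"]) auto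

lemma gf_up: "W \<in> gen_filter S \<Longrightarrow> W \<subseteq> W' \<Longrightarrow> W' \<in> gen_filter S"
  unfolding gen_filter_def by blast

lemma gf_Int:
  assumes "W1 \<in> gen_filter S" "W2 \<in> gen_filter S"
  shows "W1 \<inter> W2 \<in> gen_filter S"
proof -
  obtain F1 F2 where "finite F1" "F1 \<subseteq> S" "\<Inter>F1 \<subseteq> W1" "finite F2" "F2 \<subseteq> S" "\<Inter>F2 \<subseteq> W2"
    using assms unfolding gen_filter_def by blast
  then show ?thesis unfolding gen_filter_def
    by (intro CollectI exI[of _ "F1 \<union> F2"]) auto
qed

lemma gf_Id: "\<forall>s\<in>S. Id \<subseteq> s \<Longrightarrow> W \<in> gen_filter S \<Longrightarrow> Id \<subseteq> W"
  unfolding gen_filter_def by blast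

lemma relcomp_Int_sub: "(A \<inter> B) O (A \<inter> B) \<subseteq> (A O A) \<inter> (B O B)"
  by blast

lemma gf_root_Inter:
  assumes "\<forall>s\<in>S. \<exists>V\<in>gen_filter S. V O V \<subseteq> s" "finite F" "F \<subseteq> S"
  shows "\<exists>V\<in>gen_filter S. V O V \<subseteq> \<Inter>F"
  using assms(2,3)
proof (induction F rule: finite_induct)
  case empty
  have "UNIV O UNIV \<subseteq> \<Inter>{}" by simp
  then show ?case using gf_UNIV by blast
next
  case (insert s F)
  have "s \<in> S" using insert.prems by simp
  then obtain V1 where V1: "V1 \<in> gen_filter S" "V1 O V1 \<subseteq> s" using assms(1) by blast
  have "F \<subseteq> S" using insert.prems by simp
  then obtain V2 where V2: "V2 \<in> gen_filter S" "V2 O V2 \<subseteq> \<Inter>F" using insert.IH by blast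
  have "(V1 \<inter> V2) O (V1 \<inter> V2) \<subseteq> s \<inter> \<Inter>F"
    using relcomp_Int_sub[of V1 V2] V1(2) V2(2) by (meson dual_order.trans le_inf_iff)
  then have "(V1 \<inter> V2) O (V1 \<inter> V2) \<subseteq> \<Inter>(insert s F)" by simp
  then show ?case using gf_Int[OF V1(1) V2(1)] by blast
qed

lemma gf_qu:
  assumes "\<forall>s\<in>S. Id \<subseteq> s" "\<forall>s\<in>S. \<exists>V\<in>gen_filter S. V O V \<subseteq> s"
  shows "quasi_uniformity (gen_filter S)"
proof -
  have 1: "gen_filter S \<noteq> {}" using gf_UNIV by blast
  have 2: "\<forall>U\<in>gen_filter S. Id \<subseteq> U" using gf_Id[OF assms(1)] by blast
  have 3: "\<forall>U V. U \<in> gen_filter S \<longrightarrow> U \<subseteq> V \<longrightarrow> V \<in> gen_filter S" by (metis gf_up)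
  have 4: "\<forall>U V. U \<in> gen_filter S \<longrightarrow> V \<in> gen_filter S \<longrightarrow> U \<inter> V \<in> gen_filter S"
    by (metis gf_Int)
  have 5: "\<forall>U\<in>gen_filter S. \<exists>V\<in>gen_filter S. V O V \<subseteq> U"
  proof
    fix U assume "U \<in> gen_filter S"
    then obtain F where F: "finite F" "F \<subseteq> S" "\<Inter>F \<subseteq> U" unfolding gen_filter_def by blast
    obtain V where "V \<in> gen_filter S" "V O V \<subseteq> \<Inter>F" using gf_root_Inter[OF assms(2) F(1,2)] by blast
    then show "\<exists>V\<in>gen_filter S. V O V \<subseteq> U" using F(3) by (meson order_trans)
  qed
  show ?thesis unfolding quasi_uniformity_def by (intro conjI 1 2 3 4 5)
qed

lemma qu_UNIV: "quasi_uniformity U \<Longrightarrow> UNIV \<in> U"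
  unfolding quasi_uniformity_def by blast

lemma qu_up: "quasi_uniformity U \<Longrightarrow> A \<in> U \<Longrightarrow> A \<subseteq> B \<Longrightarrow> B \<in> U"
  unfolding quasi_uniformity_def by metis

lemma qu_Int: "quasi_uniformity U \<Longrightarrow> A \<in> U \<Longrightarrow> B \<in> U \<Longrightarrow> A \<inter> B \<in> U"
  unfolding quasi_uniformity_def by metis

lemma qu_Inter:
  assumes "quasi_uniformity U" "finite F" "F \<subseteq> U" shows "\<Inter>F \<in> U"
  using assms(2,3)
proof (induction F rule: finite_induct)
  case empty
  then show ?case using qu_UNIV[OF assms(1)] by simp
next
  case (insert s F) then show ?case using assms(1) unfolding quasi_uniformity_def by auto
qed

lemma gf_least:
  assumes "quasi_uniformity U" "S \<subseteq> U" shows "gen_filter S \<subseteq> U"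
proof
  fix W assume "W \<in> gen_filter S"
  then obtain F where F: "finite F" "F \<subseteq> S" "\<Inter>F \<subseteq> W" unfolding gen_filter_def by blast
  have "\<Inter>F \<in> U" using qu_Inter[OF assms(1) F(1)] F(2) assms(2) by blast
  then show "W \<in> U" using F(3) qu_up[OF assms(1)] by blast
qed

lemma qp_Un1: "quasi_proximity \<delta> \<Longrightarrow> \<delta> (A \<union> B) C \<longleftrightarrow> \<delta> A C \<or> \<delta> B C"
  unfolding quasi_proximity_def by blast
lemma qp_Un2: "quasi_proximity \<delta> \<Longrightarrow> \<delta> A (B \<union> C) \<longleftrightarrow> \<delta> A B \<or> \<delta> A C"
  unfolding quasi_proximity_def by blast
lemma qp_empty1: "quasi_proximity \<delta> \<Longrightarrow> \<not> \<delta> A {}"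
  unfolding quasi_proximity_def by blast
lemma qp_empty2: "quasi_proximity \<delta> \<Longrightarrow> \<not> \<delta> {} A"
  unfolding quasi_proximity_def by blast

lemma qp_mono:
  assumes "quasi_proximity \<delta>" "\<delta> A B" "A \<subseteq> A'" "B \<subseteq> B'" shows "\<delta> A' B'"
proof -
  have "\<delta> A' B" using qp_Un1[OF assms(1), of A A' B] assms(2,3) by (metis Un_absorb1)
  then show ?thesis using qp_Un2[OF assms(1), of A' B B'] assms(4) by (metis Un_absorb1)
qed

lemma qp_nmono: "quasi_proximity \<delta> \<Longrightarrow> \<not> \<delta> A' B' \<Longrightarrow> A \<subseteq> A' \<Longrightarrow> B \<subseteq> B' \<Longrightarrow> \<not> \<delta> A B"
  using qp_mono by blast

lemma qp_disj:
  assumes "quasi_proximity \<delta>" "\<not> \<delta> A B" shows "A \<inter> B = {}"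
proof (rule ccontr)
  assume "A \<inter> B \<noteq> {}"
  then obtain x where "x \<in> A" "x \<in> B" by blast
  moreover have "\<delta> {x} {x}" using assms(1) unfolding quasi_proximity_def by blast
  ultimately show False using qp_mono[OF assms(1)] assms(2) by blast
qed

lemma disj_aux1: "A \<subseteq> B \<Longrightarrow> B \<inter> Q = {} \<Longrightarrow> A \<inter> UNIV \<inter> Q = {}" by blast
lemma disj_aux2: "(-Q0) \<inter> A \<inter> G \<inter> Q = {} \<Longrightarrow> A \<inter> G \<inter> (Q - Q0) = {}" by blast

lemma UNIV_Image_sing: "UNIV `` {x} = UNIV" by auto

lemma prox_ind:
  assumes qp: "quasi_proximity \<delta>"
    and base: "\<And>P Q. \<forall>x\<in>P. g x \<inter> Q = {} \<Longrightarrow> \<not> \<delta> P Q"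
    and fin: "finite F" and sub: "F \<subseteq> SS \<delta>"
  shows "\<forall>P Q. (\<forall>x\<in>P. (\<Inter>F) `` {x} \<inter> g x \<inter> Q = {}) \<longrightarrow> \<not> \<delta> P Q"
  using fin sub
proof (induction F rule: finite_induct)
  case empty
  show ?case using base by (simp add: UNIV_Image_sing)
next
  case (insert s F)
  from insert.prems obtain P0 Q0 where s: "s = SPQ P0 Q0" "\<not> \<delta> P0 Q0" unfolding SS_def by blast
  have FS: "F \<subseteq> SS \<delta>" using insert.prems by blast
  have IH: "\<forall>P Q. (\<forall>x\<in>P. (\<Inter>F) `` {x} \<inter> g x \<inter> Q = {}) \<longrightarrow> \<not> \<delta> P Q" using insert.IH FS by blast
  have img: "\<And>x. (\<Inter>(insert s F)) `` {x} = s `` {x} \<inter> (\<Inter>F) `` {x}" by auto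
  show ?case
  proof (intro allI impI)
    fix P Q assume H: "\<forall>x\<in>P. \<Inter> (insert s F) `` {x} \<inter> g x \<inter> Q = {}"
    have H': "(if x \<in> P0 then -Q0 else UNIV) \<inter> (\<Inter>F) `` {x} \<inter> g x \<inter> Q = {}" if "x \<in> P" for x
    proof -
      have "(\<Inter>(insert s F)) `` {x} \<inter> g x \<inter> Q = {}" using H that by blast
      moreover have "(\<Inter>(insert s F)) `` {x} = (if x \<in> P0 then -Q0 else UNIV) \<inter> (\<Inter>F) `` {x}"
        using SPQ_img[of P0 Q0 x] s(1) by auto
      ultimately show ?thesis by simp
    qed
    have h1: "\<forall>x\<in>P - P0. (\<Inter>F) `` {x} \<inter> g x \<inter> Q = {}"
    proof
      fix x assume x: "x \<in> P - P0"
      show "(\<Inter>F) `` {x} \<inter> g x \<inter> Q = {}" using H'[of x] x by simp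
    qed
    have h2: "\<forall>x\<in>P \<inter> P0. (\<Inter>F) `` {x} \<inter> g x \<inter> (Q - Q0) = {}"
    proof
      fix x assume x: "x \<in> P \<inter> P0"
      then have "- Q0 \<inter> (\<Inter>F) `` {x} \<inter> g x \<inter> Q = {}" using H'[of x] by simp
      then show "(\<Inter>F) `` {x} \<inter> g x \<inter> (Q - Q0) = {}" by (rule disj_aux2)
    qed
    have 1: "\<not> \<delta> (P - P0) Q" using IH[THEN spec, THEN spec, THEN mp, OF h1] .
    have 2: "\<not> \<delta> (P \<inter> P0) (Q - Q0)" using IH[THEN spec, THEN spec, THEN mp, OF h2] .
    have 3: "\<not> \<delta> (P \<inter> P0) (Q \<inter> Q0)" using qp_nmono[OF qp s(2)] by blast
    have "\<not> \<delta> (P \<inter> P0) ((Q - Q0) \<union> (Q \<inter> Q0))" using 2 3 qp_Un2[OF qp] by blast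
    then have 4: "\<not> \<delta> (P \<inter> P0) Q" by (simp add: Un_Diff_Int)
    have "\<not> \<delta> ((P - P0) \<union> (P \<inter> P0)) Q" using 1 4 qp_Un1[OF qp] by blast
    then show "\<not> \<delta> P Q" by (simp add: Un_Diff_Int)
  qed
qed

lemma SS_refl:
  assumes qp: "quasi_proximity \<delta>" shows "\<forall>s\<in>SS \<delta>. Id \<subseteq> s"
proof
  fix s assume "s \<in> SS \<delta>"
  then obtain P Q where s: "s = SPQ P Q" "\<not> \<delta> P Q" unfolding SS_def by blast
  have "P \<inter> Q = {}" using qp_disj[OF qp s(2)] .
  then show "Id \<subseteq> s" unfolding s(1) SPQ_def by auto
qed

lemma SPQ_comp: "(SPQ P C \<inter> SPQ (-C) Q) O (SPQ P C \<inter> SPQ (-C) Q) \<subseteq> SPQ P Q"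
proof
  fix p assume "p \<in> (SPQ P C \<inter> SPQ (-C) Q) O (SPQ P C \<inter> SPQ (-C) Q)"
  then obtain x y z where "p = (x, z)" "(x, y) \<in> SPQ P C \<inter> SPQ (-C) Q" "(y, z) \<in> SPQ P C \<inter> SPQ (-C) Q"
    by (meson relcompE)
  then show "p \<in> SPQ P Q" unfolding SPQ_def by auto
qed

lemma qp_sep: "quasi_proximity \<delta> \<Longrightarrow> \<not> \<delta> A B \<Longrightarrow> \<exists>C. \<not> \<delta> A C \<and> \<not> \<delta> (-C) B"
  unfolding quasi_proximity_def by metis

lemma SS_root:
  assumes qp: "quasi_proximity \<delta>"
  shows "\<forall>s\<in>SS \<delta>. \<exists>V\<in>gen_filter (SS \<delta>). V O V \<subseteq> s"
proof
  fix s assume "s \<in> SS \<delta>"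
  then obtain P Q where s: "s = SPQ P Q" "\<not> \<delta> P Q" unfolding SS_def by blast
  then obtain C where C: "\<not> \<delta> P C" "\<not> \<delta> (-C) Q" using qp_sep[OF qp s(2)] by blast
  have m1: "SPQ P C \<in> gen_filter (SS \<delta>)" using C(1) by (intro gf_mem) (auto simp: SS_def)
  have m2: "SPQ (-C) Q \<in> gen_filter (SS \<delta>)" using C(2) by (intro gf_mem) (auto simp: SS_def)
  have "(SPQ P C \<inter> SPQ (-C) Q) O (SPQ P C \<inter> SPQ (-C) Q) \<subseteq> s"
    unfolding s(1) by (rule SPQ_comp)
  then show "\<exists>V\<in>gen_filter (SS \<delta>). V O V \<subseteq> s" by (rule bexI[OF _ gf_Int[OF m1 m2]])
qed

lemma V0_qu: "quasi_proximity \<delta> \<Longrightarrow> quasi_uniformity (gen_filter (SS \<delta>))"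
  using gf_qu[OF SS_refl SS_root] .

lemma V0_prox:
  assumes qp: "quasi_proximity \<delta>"
  shows "qu_proximity (gen_filter (SS \<delta>)) = \<delta>"
proof (intro ext iffI)
  fix P Q assume a: "qu_proximity (gen_filter (SS \<delta>)) P Q"
  show "\<delta> P Q"
  proof (rule ccontr)
    assume n: "\<not> \<delta> P Q"
    have "SPQ P Q \<in> SS \<delta>" using n unfolding SS_def by blast
    then have m: "SPQ P Q \<in> gen_filter (SS \<delta>)" by (rule gf_mem)
    have e: "SPQ P Q `` P \<inter> Q = {}" unfolding SPQ_def by blast
    have "\<forall>U\<in>gen_filter (SS \<delta>). U `` P \<inter> Q \<noteq> {}" using a unfolding qu_proximity_def .
    then show False using m e by blast
  qed
next
  fix P Q assume d: "\<delta> P Q"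
  have base: "\<not> \<delta> P Q" if "\<forall>x\<in>P. (\<lambda>x. UNIV) x \<inter> Q = {}" for P Q
  proof (cases "P = {}")
    case True then show ?thesis using qp_empty2[OF qp] by simp
  next
    case False then obtain x where "x \<in> P" by blast
    then have "Q = {}" using that by blast
    then show ?thesis using qp_empty1[OF qp] by simp
  qed
  show "qu_proximity (gen_filter (SS \<delta>)) P Q" unfolding qu_proximity_def
  proof
    fix W assume "W \<in> gen_filter (SS \<delta>)"
    then obtain F where F: "finite F" "F \<subseteq> SS \<delta>" "\<Inter>F \<subseteq> W" unfolding gen_filter_def by blast
    have pi: "\<forall>P Q. (\<forall>x\<in>P. (\<Inter>F) `` {x} \<inter> (\<lambda>x. UNIV) x \<inter> Q = {}) \<longrightarrow> \<not> \<delta> P Q"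
      by (rule prox_ind[OF qp base F(1,2)])
    show "W `` P \<inter> Q \<noteq> {}"
    proof
      assume E: "W `` P \<inter> Q = {}"
      have "(\<Inter>F) `` {x} \<inter> (\<lambda>x. UNIV) x \<inter> Q = {}" if "x \<in> P" for x
      proof -
        have "(\<Inter>F) `` {x} \<subseteq> W `` P" by (rule Image_mono[OF F(3)]) (use that in simp)
        then show ?thesis using disj_aux1 E by metis
      qed
      then have "\<not> \<delta> P Q" using pi by blast
      then show False using d by contradiction
    qed
  qed
qed

lemma V0_least:
  assumes "W \<in> pi_qp \<delta>" shows "gen_filter (SS \<delta>) \<subseteq> W"
proof (rule gf_least)
  show qu: "quasi_uniformity W" using assms unfolding pi_qp_def by blast
  have pr: "qu_proximity W = \<delta>" using assms unfolding pi_qp_def by blast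
  show "SS \<delta> \<subseteq> W"
  proof
    fix s assume "s \<in> SS \<delta>"
    then obtain P Q where s: "s = SPQ P Q" "\<not> \<delta> P Q" unfolding SS_def by blast
    then have "\<not> qu_proximity W P Q" using pr by simp
    then obtain U where "U \<in> W" "U `` P \<inter> Q = {}" unfolding qu_proximity_def by blast
    moreover then have "U \<subseteq> s" unfolding s(1) SPQ_def by auto
    ultimately show "s \<in> W" using qu_up[OF qu] by blast
  qed
qed

lemma V_qp_eq:
  assumes qp: "quasi_proximity \<delta>" shows "V_qp \<delta> = gen_filter (SS \<delta>)"
  unfolding V_qp_def
proof (rule the_equality)
  have m: "gen_filter (SS \<delta>) \<in> pi_qp \<delta>"
    unfolding pi_qp_def using V0_qu[OF qp] V0_prox[OF qp] by (intro CollectI conjI)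
  show "gen_filter (SS \<delta>) \<in> pi_qp \<delta> \<and> (\<forall>\<W>\<in>pi_qp \<delta>. gen_filter (SS \<delta>) \<subseteq> \<W>)"
    using m V0_least by (intro conjI ballI)
  fix U assume U: "U \<in> pi_qp \<delta> \<and> (\<forall>\<W>\<in>pi_qp \<delta>. U \<subseteq> \<W>)"
  then have "U \<subseteq> gen_filter (SS \<delta>)" using m by blast
  moreover have "gen_filter (SS \<delta>) \<subseteq> U" using V0_least U by blast
  ultimately show "U = gen_filter (SS \<delta>)" by (rule antisym)
qed

lemma SS_finrange:
  assumes "finite F" "F \<subseteq> SS \<delta>" shows "finite (range (\<lambda>x. (\<Inter>F) `` {x}))"
  using assms
proof (induction F rule: finite_induct)
  case empty
  show ?case by (simp add: UNIV_Image_sing)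
next
  case (insert s F)
  obtain P0 Q0 where s: "s = SPQ P0 Q0" using insert.prems unfolding SS_def by blast
  have IH: "finite (range (\<lambda>x. (\<Inter>F) `` {x}))" using insert.IH insert.prems by blast
  have eq: "\<And>x. (\<Inter>(insert s F)) `` {x} = s `` {x} \<inter> (\<Inter>F) `` {x}" by auto
  have sv: "\<And>x. s `` {x} \<in> {-Q0, UNIV}" unfolding s SPQ_img by simp
  have "range (\<lambda>x. (\<Inter>(insert s F)) `` {x}) \<subseteq> (\<lambda>p. fst p \<inter> snd p) ` ({-Q0, UNIV} \<times> range (\<lambda>x. (\<Inter>F) `` {x}))"
  proof
    fix y assume "y \<in> range (\<lambda>x. (\<Inter>(insert s F)) `` {x})"
    then obtain x where x: "y = (\<Inter>(insert s F)) `` {x}" by blast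
    have "y = (\<lambda>p. fst p \<inter> snd p) (s `` {x}, (\<Inter>F) `` {x})" using x eq by simp
    moreover have "(s `` {x}, (\<Inter>F) `` {x}) \<in> {-Q0, UNIV} \<times> range (\<lambda>x. (\<Inter>F) `` {x})"
      using sv by blast
    ultimately show "y \<in> (\<lambda>p. fst p \<inter> snd p) ` ({-Q0, UNIV} \<times> range (\<lambda>x. (\<Inter>F) `` {x}))"
      by (rule image_eqI)
  qed
  moreover have "finite ({-Q0, UNIV} \<times> range (\<lambda>x. (\<Inter>F) `` {x}))"
    using IH by (intro finite_cartesian_product) simp_all
  ultimately show ?case by (meson finite_subset finite_imageI)
qed


lemma U_rel_img: "U_rel N C `` {x} = \<Inter>{M \<in> alpha_fam N C. x \<in> M}"
  unfolding U_rel_def by auto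

lemma U_rel_refl: "(x, x) \<in> U_rel N C"
  unfolding U_rel_def by auto

lemma U_rel_Id: "Id \<subseteq> U_rel N C"
  using U_rel_refl by auto

lemma U_rel_trans: "trans (U_rel N C)"
  unfolding trans_def U_rel_def by blast

lemma U_rel_mono: "C \<subseteq> C' \<Longrightarrow> U_rel N C \<subseteq> U_rel N C'"
  unfolding U_rel_def alpha_fam_def by blast

lemma U_rel_sub: "i \<notin> C \<Longrightarrow> x \<in> N i \<Longrightarrow> U_rel N C `` {x} \<subseteq> N i"
  unfolding U_rel_img alpha_fam_def by blast

lemma U_rel_shape:
  fixes N :: "nat \<Rightarrow> 'a set"
  assumes mono: "mono N"
  shows "U_rel N C `` {x} = UNIV \<or> (\<exists>j. j \<notin> C \<and> x \<in> N j \<and> U_rel N C `` {x} = N j)"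
proof (cases "\<exists>i. i \<notin> C \<and> x \<in> N i")
  case True
  define j where "j = (LEAST i. i \<notin> C \<and> x \<in> N i)"
  have j: "j \<notin> C \<and> x \<in> N j" using LeastI_ex[OF True] unfolding j_def .
  have "U_rel N C `` {x} = N j"
  proof
    show "U_rel N C `` {x} \<subseteq> N j" using U_rel_sub[of j C x N] j by simp
    show "N j \<subseteq> U_rel N C `` {x}"
      unfolding U_rel_img
    proof (rule Inter_greatest)
      fix M assume "M \<in> {M \<in> alpha_fam N C. x \<in> M}"
      then have M: "M \<in> alpha_fam N C" "x \<in> M" by auto
      from M(1) consider "M = UNIV" | i where "M = N i" "i \<notin> C" unfolding alpha_fam_def by blast
      then show "N j \<subseteq> M"
      proof cases
        case 1 then show ?thesis by simp
      next
        case 2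
        have "j \<le> i" unfolding j_def by (rule Least_le) (use 2 M(2) in simp)
        then have "N j \<subseteq> N i" using mono unfolding mono_def by blast
        then show ?thesis using 2 by simp
      qed
    qed
  qed
  then show ?thesis using j by blast
next
  case False
  have "\<forall>M\<in>{M \<in> alpha_fam N C. x \<in> M}. M = UNIV"
    using False unfolding alpha_fam_def by blast
  then have "U_rel N C `` {x} = UNIV" unfolding U_rel_img Inter_UNIV_conv .
  then show ?thesis by blast
qed

lemma level_base:
  fixes N :: "nat \<Rightarrow> 'a set"
  assumes qp: "quasi_proximity \<delta>" and mono: "mono N"
    and nj: "\<And>j. \<not> \<delta> (N j) (- N j)" and nu: "\<not> \<delta> (\<Union>(range N)) (- \<Union>(range N))"
    and g: "\<And>x. g x = UNIV \<or> (\<exists>j. x \<in> N j \<and> g x = N j)"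
    and PQ: "\<forall>x\<in>P. g x \<inter> Q = {}"
  shows "\<not> \<delta> P Q"
proof (cases "\<exists>x\<in>P. g x = UNIV")
  case True then have "Q = {}" using PQ by auto
  then show ?thesis using qp_empty1[OF qp] by simp
next
  case False
  then have PJ: "\<forall>x\<in>P. \<exists>j. x \<in> N j \<and> N j \<inter> Q = {}" using g PQ by metis
  define J where "J = {j. N j \<inter> Q = {}}"
  have down: "i \<in> J" if "j \<in> J" "i \<le> j" for i j
  proof -
    have "N i \<subseteq> N j" using mono that(2) unfolding mono_def by blast
    then show ?thesis using that(1) unfolding J_def by blast
  qed
  show ?thesis
  proof (cases "J = UNIV")
    case True
    have "Q \<subseteq> - \<Union>(range N)" using True unfolding J_def by auto
    moreover have "P \<subseteq> \<Union>(range N)" using PJ by blast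
    ultimately show ?thesis using qp_nmono[OF qp nu] by blast
  next
    case False
    then obtain m where m: "m \<notin> J" by blast
    have Jb: "J \<subseteq> {..<m}"
    proof
      fix j assume "j \<in> J"
      then show "j \<in> {..<m}" using down[of j m] m by (cases "m \<le> j") auto
    qed
    show ?thesis
    proof (cases "P = {}")
      case True then show ?thesis using qp_empty2[OF qp] by simp
    next
      case False
      then have Jne: "J \<noteq> {}" using PJ unfolding J_def by blast
      have fJ: "finite J" using Jb finite_subset by blast
      define M where "M = Max J"
      have MJ: "M \<in> J" using Max_in[OF fJ Jne] unfolding M_def .
      have "P \<subseteq> N M"
      proof
        fix x assume "x \<in> P"
        then obtain j where "x \<in> N j" "j \<in> J" using PJ unfolding J_def by blast
        moreover have "j \<le> M" using Max_ge[OF fJ \<open>j \<in> J\<close>] unfolding M_def .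
        ultimately show "x \<in> N M" using mono unfolding mono_def by blast
      qed
      moreover have "Q \<subseteq> - N M" using MJ unfolding J_def by blast
      ultimately show ?thesis using qp_nmono[OF qp nj] by blast
    qed
  qed
qed

lemma Vs_reduce:
  assumes qu: "quasi_uniformity VD" and nf: "nat_filter \<sigma>"
    and W: "W \<in> gen_filter (VD \<union> {U_rel N A | A. A \<in> \<sigma>})"
  shows "\<exists>V\<in>VD. \<exists>C\<in>\<sigma>. V \<inter> U_rel N C \<subseteq> W"
proof -
  obtain G where G: "finite G" "G \<subseteq> VD \<union> {U_rel N A | A. A \<in> \<sigma>}" "\<Inter>G \<subseteq> W"
    using W unfolding gen_filter_def by blast
  have "\<exists>V\<in>VD. \<exists>C\<in>\<sigma>. V \<inter> U_rel N C \<subseteq> \<Inter>G" using G(1,2)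
  proof (induction G rule: finite_induct)
    case empty
    have "UNIV \<in> VD" using qu_UNIV[OF qu] .
    moreover have "UNIV \<in> \<sigma>" using nf unfolding nat_filter_def by blast
    ultimately show ?case by blast
  next
    case (insert s G)
    then obtain V C where VC: "V \<in> VD" "C \<in> \<sigma>" "V \<inter> U_rel N C \<subseteq> \<Inter>G" by blast
    have "s \<in> VD \<or> (\<exists>A. A \<in> \<sigma> \<and> s = U_rel N A)" using insert.prems by blast
    then show ?case
    proof
      assume s: "s \<in> VD"
      then have "V \<inter> s \<in> VD" using VC(1) qu unfolding quasi_uniformity_def by blast
      moreover have "(V \<inter> s) \<inter> U_rel N C \<subseteq> \<Inter>(insert s G)" using VC(3) by blast
      ultimately show ?case using VC(2) by blast
    next
      assume "\<exists>A. A \<in> \<sigma> \<and> s = U_rel N A"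
      then obtain A where A: "A \<in> \<sigma>" "s = U_rel N A" by blast
      have CA: "C \<inter> A \<in> \<sigma>" using nf VC(2) A(1) unfolding nat_filter_def by blast
      have "U_rel N (C \<inter> A) \<subseteq> U_rel N C" "U_rel N (C \<inter> A) \<subseteq> U_rel N A"
        by (auto intro: U_rel_mono[THEN subsetD])
      then have "V \<inter> U_rel N (C \<inter> A) \<subseteq> \<Inter>(insert s G)" using VC(3) A(2) by blast
      then show ?case using VC(1) CA by blast
    qed
  qed
  then show ?thesis using G(3) by (meson order_trans)
qed


lemma sub_card_Suc:
  assumes "\<not> (finite Z \<and> card Z \<le> n)"
  obtains S where "S \<subseteq> Z" "finite S" "card S = Suc n"
proof (cases "finite Z")
  case True
  then have "Suc n \<le> card Z" using assms by simp
  then show ?thesis using obtain_subset_with_card_n that by metis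
next
  case False
  then show ?thesis using infinite_arbitrarily_large that by metis
qed

lemma adm_lemma:
  fixes N :: "nat \<Rightarrow> 'a set" and R :: "('a \<times> 'a) set"
  assumes mono: "mono N" and strict: "\<And>i. N i \<subset> N (Suc i)"
    and fin: "finite (range (\<lambda>x. R `` {x}))" and refl: "Id \<subseteq> R"
    and sub: "R \<inter> U_rel N B \<subseteq> U_rel N A"
    and shape: "\<And>x. U_rel N B `` {x} = UNIV \<or> (\<exists>j. j \<notin> B \<and> x \<in> N j \<and> U_rel N B `` {x} = N j)"
  shows "admissible B (B - A)"
proof -
  define n where "n = card (range (\<lambda>x. R `` {x}))"
  define pt where "pt i = (SOME x. x \<in> N i \<and> x \<notin> N (i - 1))" for i
  have pt: "pt i \<in> N i \<and> (\<forall>k<i. pt i \<notin> N k)" if "i \<ge> 1" for i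
  proof -
    have "N (i - 1) \<subset> N i" using strict[of "i - 1"] that by simp
    then have "\<exists>x. x \<in> N i \<and> x \<notin> N (i - 1)" by blast
    then have p: "pt i \<in> N i \<and> pt i \<notin> N (i - 1)" unfolding pt_def by (rule someI_ex)
    have "pt i \<notin> N k" if "k < i" for k
    proof
      assume "pt i \<in> N k"
      moreover have "N k \<subseteq> N (i - 1)" using mono \<open>k < i\<close> unfolding mono_def by simp
      ultimately show False using p by blast
    qed
    then show ?thesis using p by blast
  qed
  have key: "R `` {pt i} \<noteq> R `` {pt i'}"
    if H: "pile B H" and i: "i \<in> H" "i \<notin> A" and i': "i' \<in> H" "i' \<notin> A"
      and i1: "i \<ge> 1" and ii: "i < i'" for H i i'
  proof
    assume eq: "R `` {pt i} = R `` {pt i'}"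
    define x where "x = pt i"
    define y where "y = pt i'"
    have i'1: "i' \<ge> 1" using i1 ii by simp
    have x: "x \<in> N i" "\<forall>k<i. x \<notin> N k" using pt[OF i1] unfolding x_def by auto
    have y: "y \<in> N i'" "\<forall>k<i'. y \<notin> N k" using pt[OF i'1] unfolding y_def by auto
    have HB: "H \<subseteq> B" and conv: "nat_convex H" using H unfolding pile_def by auto
    have "(y, y) \<in> R" using refl by auto
    then have xyR: "(x, y) \<in> R" using eq unfolding x_def y_def by auto
    have "y \<in> U_rel N B `` {x}"
    proof (cases "U_rel N B `` {x} = UNIV")
      case True then show ?thesis by simp
    next
      case False
      then obtain j where j: "j \<notin> B" "x \<in> N j" "U_rel N B `` {x} = N j" using shape[of x] by blast
      have "\<not> j < i" using x j(2) by blast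
      moreover have "j \<noteq> i" using j(1) i(1) HB by blast
      moreover have "j \<noteq> i'" using j(1) i'(1) HB by blast
      moreover have "\<not> (i < j \<and> j < i')"
      proof
        assume "i < j \<and> j < i'"
        then have "j \<in> H" using conv i(1) i'(1) unfolding nat_convex_def by blast
        then show False using j(1) HB by blast
      qed
      ultimately have "i' < j" by linarith
      then have "N i' \<subseteq> N j" using mono unfolding mono_def by simp
      then show ?thesis using y(1) j(3) by blast
    qed
    then have "(x, y) \<in> U_rel N B" by simp
    then have "(x, y) \<in> U_rel N A" using xyR sub by blast
    then have "y \<in> U_rel N A `` {x}" by simp
    then have "y \<in> N i" using U_rel_sub[of i A x N] i(2) x(1) by blast
    then show False using y(2) ii by blast
  qed
  show ?thesis unfolding admissible_def
  proof (intro exI allI impI)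
    fix H assume H: "pile B H"
    define Z where "Z = H \<inter> (B - A) - {0}"
    have Z: "finite Z \<and> card Z \<le> n"
    proof (rule ccontr)
      assume "\<not> (finite Z \<and> card Z \<le> n)"
      then obtain S where S: "S \<subseteq> Z" "finite S" "card S = Suc n" by (rule sub_card_Suc)
      define f where "f i = R `` {pt i}" for i
      have "inj_on f S"
      proof (rule inj_onI)
        fix i i' assume ii: "i \<in> S" "i' \<in> S" "f i = f i'"
        have m: "i \<in> H" "i \<notin> A" "i \<ge> 1" "i' \<in> H" "i' \<notin> A" "i' \<ge> 1"
          using ii(1,2) S(1) unfolding Z_def by auto
        show "i = i'"
        proof (rule ccontr)
          assume "i \<noteq> i'"
          then consider "i < i'" | "i' < i" by linarith
          then show False
          proof cases
            case 1 then show False using key[OF H m(1,2) m(4,5) m(3)] ii(3) unfolding f_def by blast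
          next
            case 2 then show False using key[OF H m(4,5) m(1,2) m(6)] ii(3) unfolding f_def by metis
          qed
        qed
      qed
      then have "card (f ` S) = Suc n" using card_image S(3) by metis
      moreover have "f ` S \<subseteq> range (\<lambda>x. R `` {x})" unfolding f_def by blast
      ultimately have "Suc n \<le> n" using card_mono[OF fin] unfolding n_def by metis
      then show False by simp
    qed
    have sub0: "H \<inter> (B - A) \<subseteq> insert 0 Z" unfolding Z_def by blast
    have fin0: "finite (insert 0 Z)" using Z by simp
    have "card (insert 0 Z) \<le> Suc (card Z)" using Z by (simp add: card_insert_if)
    then have "card (H \<inter> (B - A)) \<le> n + 1" using card_mono[OF fin0 sub0] Z by simp
    then show "finite (H \<inter> (B - A)) \<and> card (H \<inter> (B - A)) \<le> n + 1"
      using finite_subset[OF sub0 fin0] by simp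
  qed
qed


lemma qu_refl: "quasi_uniformity U \<Longrightarrow> s \<in> U \<Longrightarrow> Id \<subseteq> s"
  unfolding quasi_uniformity_def by metis

lemma qu_root: "quasi_uniformity U \<Longrightarrow> s \<in> U \<Longrightarrow> \<exists>V. V \<in> U \<and> V O V \<subseteq> s"
  unfolding quasi_uniformity_def by metis

lemma disj_aux3: "A \<subseteq> D \<Longrightarrow> A = B \<inter> C \<Longrightarrow> D \<inter> Q = {} \<Longrightarrow> B \<inter> C \<inter> Q = {}"
  by blast

lemma aux_neg_all: "(\<not> (\<forall>U\<in>S. f U \<inter> - G \<noteq> {})) \<longleftrightarrow> (\<exists>U\<in>S. f U \<subseteq> G)"
  by blast

theorem mainTheorem9:
  fixes \<tau> :: "'a topology"
    and \<delta> :: "'a set \<Rightarrow> 'a set \<Rightarrow> bool"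
    and N :: "nat \<Rightarrow> 'a set"
  assumes "topspace \<tau> = UNIV"
    and "quasi_proximity \<delta>"
    and "qp_compatible \<delta> \<tau>"
    and "transitive_qu (V_qp \<delta>)"
    and "\<And>i. N i \<in> B_qu \<tau> (V_qp \<delta>)"
    and "\<And>i. N i \<subset> N (Suc i)"
    and "(\<Union>i. N i) \<in> B_qu \<tau> (V_qp \<delta>)"
  shows "(\<forall>\<sigma>. p_filter \<sigma> \<longrightarrow> V_sigma \<delta> N \<sigma> \<in> pi_qp \<delta> \<inter> T_top \<tau>)
    \<and> (\<forall>\<sigma>1 \<sigma>2. p_filter \<sigma>1 \<longrightarrow> p_filter \<sigma>2 \<longrightarrow>
          V_sigma \<delta> N \<sigma>1 \<subseteq> V_sigma \<delta> N \<sigma>2 \<longrightarrow> \<sigma>1 \<subseteq> \<sigma>2)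
    \<and> inj_on (V_sigma \<delta> N) {\<sigma>. p_filter \<sigma>}"
proof -
  have qp: "quasi_proximity \<delta>" by (rule assms(2))
  have VD: "V_qp \<delta> = gen_filter (SS \<delta>)" using V_qp_eq[OF qp] .
  have quD: "quasi_uniformity (V_qp \<delta>)" using V0_qu[OF qp] VD by simp
  have proxD: "qu_proximity (V_qp \<delta>) = \<delta>" using V0_prox[OF qp] VD by simp
  have monoN: "mono N" unfolding mono_iff_le_Suc using assms(6) by blast
  have Bnot: "\<not> \<delta> M (-M)" if "M \<in> B_qu \<tau> (V_qp \<delta>)" for M
  proof -
    have "U_set M \<in> V_qp \<delta>" using that unfolding B_qu_def by blast
    moreover have "U_set M `` M \<inter> -M = {}" unfolding U_set_def by blast
    ultimately have "\<not> qu_proximity (V_qp \<delta>) M (-M)" unfolding qu_proximity_def by blast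
    then show "\<not> \<delta> M (-M)" using proxD by simp
  qed
  have nj: "\<And>j. \<not> \<delta> (N j) (-N j)" using Bnot assms(5) by blast
  have nu: "\<not> \<delta> (\<Union>(range N)) (- \<Union>(range N))" using Bnot assms(7) by blast
  have base: "\<not> \<delta> P Q" if "\<forall>x\<in>P. U_rel N C `` {x} \<inter> Q = {}" for C P Q
  proof (rule level_base[OF qp monoN nj nu, of "\<lambda>x. U_rel N C `` {x}"])
    show "\<And>x. U_rel N C `` {x} = UNIV \<or> (\<exists>j. x \<in> N j \<and> U_rel N C `` {x} = N j)"
      using U_rel_shape[OF monoN] by blast
    show "\<forall>x\<in>P. U_rel N C `` {x} \<inter> Q = {}" using that .
  qed
  have Vfin: "\<exists>F. finite F \<and> F \<subseteq> SS \<delta> \<and> \<Inter>F \<subseteq> V" if "V \<in> V_qp \<delta>" for V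
    using that unfolding VD gen_filter_def by blast
  have part1: "V_sigma \<delta> N \<sigma> \<in> pi_qp \<delta> \<inter> T_top \<tau>" if nf: "nat_filter \<sigma>" for \<sigma>
  proof -
    define S where "S = V_qp \<delta> \<union> {U_rel N A | A. A \<in> \<sigma>}"
    have VS: "V_sigma \<delta> N \<sigma> = gen_filter S" unfolding V_sigma_def S_def ..
    have Sid: "\<forall>s\<in>S. Id \<subseteq> s"
    proof
      fix s assume "s \<in> S"
      then have "s \<in> V_qp \<delta> \<or> (\<exists>A. s = U_rel N A)" unfolding S_def by blast
      then show "Id \<subseteq> s" using qu_refl[OF quD] U_rel_Id by blast
    qed
    have Sroot: "\<forall>s\<in>S. \<exists>V\<in>gen_filter S. V O V \<subseteq> s"
    proof
      fix s assume s: "s \<in> S"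
      then have "s \<in> V_qp \<delta> \<or> (\<exists>A. s = U_rel N A)" unfolding S_def by blast
      then show "\<exists>V\<in>gen_filter S. V O V \<subseteq> s"
      proof
        assume "s \<in> V_qp \<delta>"
        then obtain V where V: "V \<in> V_qp \<delta>" "V O V \<subseteq> s"
          using qu_root[OF quD] by blast
        have "V \<in> gen_filter S" using V(1) unfolding S_def by (intro gf_mem) blast
        then show ?thesis using V(2) by (rule bexI[rotated])
      next
        assume "\<exists>A. s = U_rel N A"
        then obtain A where A: "s = U_rel N A" by blast
        have "s O s \<subseteq> s" unfolding A by (rule trans_O_subset[OF U_rel_trans])
        moreover have "s \<in> gen_filter S" using s by (rule gf_mem)
        ultimately show ?thesis by (rule bexI)
      qed
    qed
    have qu: "quasi_uniformity (V_sigma \<delta> N \<sigma>)" unfolding VS by (rule gf_qu[OF Sid Sroot])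
    have sub: "V_qp \<delta> \<subseteq> V_sigma \<delta> N \<sigma>" unfolding VS S_def using gf_mem by blast
    have red: "\<exists>V\<in>V_qp \<delta>. \<exists>C\<in>\<sigma>. V \<inter> U_rel N C \<subseteq> W" if "W \<in> V_sigma \<delta> N \<sigma>" for W
      using Vs_reduce[OF quD nf] that unfolding VS S_def by blast
    have prox: "qu_proximity (V_sigma \<delta> N \<sigma>) = \<delta>"
    proof (intro ext iffI)
      fix P Q assume "qu_proximity (V_sigma \<delta> N \<sigma>) P Q"
      then have "qu_proximity (V_qp \<delta>) P Q" using sub unfolding qu_proximity_def by blast
      then show "\<delta> P Q" using proxD by simp
    next
      fix P Q assume d: "\<delta> P Q"
      show "qu_proximity (V_sigma \<delta> N \<sigma>) P Q" unfolding qu_proximity_def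
      proof
        fix W assume "W \<in> V_sigma \<delta> N \<sigma>"
        then obtain V C where V: "V \<in> V_qp \<delta>" "C \<in> \<sigma>" "V \<inter> U_rel N C \<subseteq> W" using red by blast
        obtain F where F: "finite F" "F \<subseteq> SS \<delta>" "\<Inter>F \<subseteq> V" using Vfin[OF V(1)] by blast
        have pi: "\<forall>P Q. (\<forall>x\<in>P. (\<Inter>F) `` {x} \<inter> U_rel N C `` {x} \<inter> Q = {}) \<longrightarrow> \<not> \<delta> P Q"
          by (rule prox_ind[OF qp base F(1,2)])
        show "W `` P \<inter> Q \<noteq> {}"
        proof
          assume E: "W `` P \<inter> Q = {}"
          have "(\<Inter>F) `` {x} \<inter> U_rel N C `` {x} \<inter> Q = {}" if "x \<in> P" for x
          proof -
            have "\<Inter>F \<inter> U_rel N C \<subseteq> W" using F(3) V(3) by blast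
            then have "(\<Inter>F \<inter> U_rel N C) `` {x} \<subseteq> W `` P"
              by (rule Image_mono) (use that in simp)
            moreover have "(\<Inter>F \<inter> U_rel N C) `` {x} = (\<Inter>F) `` {x} \<inter> U_rel N C `` {x}" by blast
            ultimately show ?thesis using E disj_aux3 by metis
          qed
          then have "\<not> \<delta> P Q" using pi by blast
          then show False using d by contradiction
        qed
      qed
    qed
    have e: "\<delta> A B \<longleftrightarrow> (\<forall>U\<in>V_sigma \<delta> N \<sigma>. U `` A \<inter> B \<noteq> {})" for A B
    proof -
      have "\<delta> A B \<longleftrightarrow> qu_proximity (V_sigma \<delta> N \<sigma>) A B" using prox by simp
      also have "\<dots> \<longleftrightarrow> (\<forall>U\<in>V_sigma \<delta> N \<sigma>. U `` A \<inter> B \<noteq> {})" unfolding qu_proximity_def ..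
      finally show ?thesis .
    qed
    have e2: "(\<not> \<delta> {x} (-G)) \<longleftrightarrow> (\<exists>U\<in>V_sigma \<delta> N \<sigma>. U `` {x} \<subseteq> G)" for x G
      using e[of "{x}" "-G"] aux_neg_all[of "V_sigma \<delta> N \<sigma>" "\<lambda>U. U `` {x}" G] by simp
    have comp: "qu_compatible (V_sigma \<delta> N \<sigma>) \<tau>" unfolding qu_compatible_def
    proof
      fix G
      have "openin \<tau> G \<longleftrightarrow> (\<forall>x\<in>G. \<not> \<delta> {x} (-G))" using assms(3) unfolding qp_compatible_def by blast
      then show "openin \<tau> G \<longleftrightarrow> (\<forall>x\<in>G. \<exists>U\<in>V_sigma \<delta> N \<sigma>. U `` {x} \<subseteq> G)"
        using e2 by simp
    qed
    have tr: "transitive_qu (V_sigma \<delta> N \<sigma>)" unfolding transitive_qu_def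
    proof
      fix W assume "W \<in> V_sigma \<delta> N \<sigma>"
      then obtain V C where V: "V \<in> V_qp \<delta>" "C \<in> \<sigma>" "V \<inter> U_rel N C \<subseteq> W" using red by blast
      obtain V' where V': "V' \<in> V_qp \<delta>" "V' \<subseteq> V" "trans V'"
        using assms(4) V(1) unfolding transitive_qu_def by blast
      have "V' \<in> gen_filter S" using V'(1) unfolding S_def by (intro gf_mem) blast
      moreover have "U_rel N C \<in> gen_filter S" using V(2) unfolding S_def by (intro gf_mem) blast
      ultimately have "V' \<inter> U_rel N C \<in> V_sigma \<delta> N \<sigma>" unfolding VS by (rule gf_Int)
      moreover have "V' \<inter> U_rel N C \<subseteq> W" using V(3) V'(2) by blast
      moreover have "trans (V' \<inter> U_rel N C)" using trans_Int[OF V'(3) U_rel_trans] .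
      ultimately show "\<exists>V\<in>V_sigma \<delta> N \<sigma>. V \<subseteq> W \<and> trans V" by blast
    qed
    show ?thesis unfolding pi_qp_def T_top_def using qu prox comp tr by blast
  qed
  have part2: "\<sigma>1 \<subseteq> \<sigma>2"
    if p1: "p_filter \<sigma>1" and p2: "p_filter \<sigma>2" and inc: "V_sigma \<delta> N \<sigma>1 \<subseteq> V_sigma \<delta> N \<sigma>2"
    for \<sigma>1 \<sigma>2
  proof
    fix A assume A: "A \<in> \<sigma>1"
    have nf2: "nat_filter \<sigma>2" using p2 unfolding p_filter_def by blast
    have "U_rel N A \<in> V_sigma \<delta> N \<sigma>1" unfolding V_sigma_def using A by (intro gf_mem) blast
    then have "U_rel N A \<in> gen_filter (V_qp \<delta> \<union> {U_rel N A | A. A \<in> \<sigma>2})"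
      using inc unfolding V_sigma_def by blast
    then obtain V B where V: "V \<in> V_qp \<delta>" "B \<in> \<sigma>2" "V \<inter> U_rel N B \<subseteq> U_rel N A"
      using Vs_reduce[OF quD nf2] by blast
    obtain F where F: "finite F" "F \<subseteq> SS \<delta>" "\<Inter>F \<subseteq> V" using Vfin[OF V(1)] by blast
    have refl: "Id \<subseteq> \<Inter>F" using SS_refl[OF qp] F(2) by blast
    have fr: "finite (range (\<lambda>x. (\<Inter>F) `` {x}))" using SS_finrange[OF F(1,2)] .
    have sb: "\<Inter>F \<inter> U_rel N B \<subseteq> U_rel N A" using F(3) V(3) by blast
    have "admissible B (B - A)"
      by (rule adm_lemma[OF monoN assms(6) fr refl sb U_rel_shape[OF monoN]])
    then have "B - (B - A) \<in> \<sigma>2" using p2 V(2) unfolding p_filter_def by blast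
    moreover have "B - (B - A) \<subseteq> A" by blast
    ultimately show "A \<in> \<sigma>2" using nf2 unfolding nat_filter_def by blast
  qed
  show ?thesis
  proof (intro conjI allI impI)
    fix \<sigma> assume "p_filter \<sigma>"
    then show "V_sigma \<delta> N \<sigma> \<in> pi_qp \<delta> \<inter> T_top \<tau>" using part1 unfolding p_filter_def by blast
  next
    fix \<sigma>1 \<sigma>2 assume "p_filter \<sigma>1" "p_filter \<sigma>2" "V_sigma \<delta> N \<sigma>1 \<subseteq> V_sigma \<delta> N \<sigma>2"
    then show "\<sigma>1 \<subseteq> \<sigma>2" using part2 by blast
  next
    show "inj_on (V_sigma \<delta> N) {\<sigma>. p_filter \<sigma>}"
    proof (rule inj_onI)
      fix \<sigma>1 \<sigma>2 assume "\<sigma>1 \<in> {\<sigma>. p_filter \<sigma>}" "\<sigma>2 \<in> {\<sigma>. p_filter \<sigma>}"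
        "V_sigma \<delta> N \<sigma>1 = V_sigma \<delta> N \<sigma>2"
      then show "\<sigma>1 = \<sigma>2" using part2 by (simp add: subset_antisym)
    qed
  qed
qed

end
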